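(* Let $k$ be a field of characteristic zero and $a,b\in k^{*}$ such that the quadratic form $\langle 1,-a\rangle\langle 1,b\rangle$ is anisotropic over $k$. Let $\mathcal{L}$ be a finite extension of $k(T)$, and let $\mathfrak{T}$ be a prime of $\mathcal{L}$ above $T$ which is unramified over $k(T)$ and whose residue field is $k$. Let $g\in k(T)^{*}$ be such that $\operatorname{ord}_T(g)$ is non-negative and even. Then at least one of the two quadratic forms $$q_1=\langle T,-aT,-1,-g\rangle\langle 1,b\rangle,\qquad q_2=\langle T,-aT,-1,-ag\rangle\langle 1,b\rangle$$ is anisotropic over $\mathcal{L}$.
   Context: $\langle c_1,\dots,c_n\rangle$ denotes the diagonal quadratic form $c_1x_1^2+\dots+c_nx_n^2$, and the product $\langle c_1,\dots,c_n\rangle\langle d_1,\dots,d_m\rangle$ denotes the tensor product form $\langle c_id_j\rangle_{i,j}$. A form is isotropic over a field if it has a nontrivial zero there, and anisotropic otherwise. A prime above $T$ is a place of $\mathcal{L}$ over the zero of $T$ in $k(T)$; $\operatorname{ord}_T$ is the normalized valuation of $k(T)$ at $T$. *)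

theory Defs
  imports "HOL-Computational_Algebra.Polynomial" "HOL-Computational_Algebra.Fraction_Field"
begin

text \<open>The rational function field k(T) is modelled as the type ('k poly) fract.\<close>

definition varT :: "'k::field poly fract" where
  "varT = Fract [:0, 1:] 1"

definition constK :: "'k::field \<Rightarrow> 'k poly fract" where
  "constK c = Fract [:c:] 1"

definition ordT :: "'k::field poly fract \<Rightarrow> int" where
  "ordT g = (THE n. \<exists>p q. p \<noteq> 0 \<and> q \<noteq> 0 \<and> g = Fract p q \<and>
                         n = int (order 0 p) - int (order 0 q))"

text \<open>Diagonal quadratic forms as coefficient lists; tensor product of diagonal forms.\<close>
definition qf_tensor :: "'a::comm_ring_1 list \<Rightarrow> 'a list \<Rightarrow> 'a list" where
  "qf_tensor cs ds = concat (map (\<lambda>c. map (\<lambda>d. c * d) ds) cs)"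

definition qf_isotropic :: "'a::field list \<Rightarrow> bool" where
  "qf_isotropic cs \<longleftrightarrow> (\<exists>xs. length xs = length cs \<and> (\<exists>x\<in>set xs. x \<noteq> 0) \<and>
      sum_list (map2 (\<lambda>c x. c * x\<^sup>2) cs xs) = 0)"

definition qf_anisotropic :: "'a::field list \<Rightarrow> bool" where
  "qf_anisotropic cs \<longleftrightarrow> \<not> qf_isotropic cs"

definition field_embedding :: "('a::field \<Rightarrow> 'b::field) \<Rightarrow> bool" where
  "field_embedding \<phi> \<longleftrightarrow> \<phi> 1 = 1 \<and> (\<forall>x y. \<phi> (x + y) = \<phi> x + \<phi> y) \<and>
      (\<forall>x y. \<phi> (x * y) = \<phi> x * \<phi> y)"

definition finite_extension :: "('a::field \<Rightarrow> 'b::field) \<Rightarrow> bool" where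
  "finite_extension \<phi> \<longleftrightarrow> field_embedding \<phi> \<and>
     (\<exists>B. finite B \<and> (\<forall>x. \<exists>c. x = (\<Sum>b\<in>B. \<phi> (c b) * b)))"

text \<open>A discrete valuation L* \<rightarrow> Z (values on 0 are irrelevant).\<close>
definition discrete_valuation :: "('b::field \<Rightarrow> int) \<Rightarrow> bool" where
  "discrete_valuation v \<longleftrightarrow>
     (\<forall>x y. x \<noteq> 0 \<and> y \<noteq> 0 \<longrightarrow> v (x * y) = v x + v y) \<and>
     (\<forall>x y. x \<noteq> 0 \<and> y \<noteq> 0 \<and> x + y \<noteq> 0 \<longrightarrow> min (v x) (v y) \<le> v (x + y))"

text \<open>A prime of L above T, unramified over k(T): its normalized valuation restricts to ord_T
  (ramification index 1).\<close>
definition unramified_prime_above_T :: "('k::field poly fract \<Rightarrow> 'L::field) \<Rightarrow> ('L \<Rightarrow> int) \<Rightarrow> bool" where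
  "unramified_prime_above_T \<phi> v \<longleftrightarrow> discrete_valuation v \<and>
     (\<forall>g. g \<noteq> 0 \<longrightarrow> v (\<phi> g) = ordT g)"

text \<open>The residue field of the prime is k: every element of the valuation ring is congruent to a
  constant of k modulo the maximal ideal.\<close>
definition residue_field_is_k :: "('k::field poly fract \<Rightarrow> 'L::field) \<Rightarrow> ('L \<Rightarrow> int) \<Rightarrow> bool" where
  "residue_field_is_k \<phi> v \<longleftrightarrow>
     (\<forall>x. x \<noteq> 0 \<and> 0 \<le> v x \<longrightarrow>
        (\<exists>c. x = \<phi> (constK c) \<or> (x - \<phi> (constK c) \<noteq> 0 \<and> 0 < v (x - \<phi> (constK c)))))"

end

theory Submission
  imports Defs
begin

lemma ordT_Fract:
  fixes p q :: "'k::field poly"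
  assumes "p \<noteq> 0" "q \<noteq> 0"
  shows "ordT (Fract p q) = int (order 0 p) - int (order 0 q)"
  unfolding ordT_def
proof (rule the_equality)
  show "\<exists>p' q'. p' \<noteq> 0 \<and> q' \<noteq> 0 \<and> Fract p q = Fract p' q' \<and>
     int (order 0 p) - int (order 0 q) = int (order 0 p') - int (order 0 q')"
    using assms by blast
next
  fix n assume "\<exists>p' q'. p' \<noteq> 0 \<and> q' \<noteq> 0 \<and> Fract p q = Fract p' q' \<and> n = int (order 0 p') - int (order 0 q')"
  then obtain p' q' where h: "p' \<noteq> 0" "q' \<noteq> 0" "Fract p q = Fract p' q'" "n = int (order 0 p') - int (order 0 q')" by blast
  have e: "p * q' = p' * q" using h assms eq_fract by metis
  have "order 0 (p * q') = order 0 (p' * q)" using e by simp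
  then have "order 0 p + order 0 q' = order 0 p' + order 0 q"
    using h assms by (simp add: order_mult)
  then show "n = int (order 0 p) - int (order 0 q)" using h by linarith
qed

lemma ordT_varT: "ordT (varT :: 'k::field poly fract) = 1"
proof -
  have "order 0 ([:0, 1::'k:]) = 1"
    using order_power_n_n[of "0::'k" 1] by simp
  then show ?thesis unfolding varT_def by (simp add: ordT_Fract)
qed

lemma ordT_constK: "(c::'k::field) \<noteq> 0 \<Longrightarrow> ordT (constK c) = 0"
  unfolding constK_def by (simp add: ordT_Fract order_0I)

lemma constK_add: "constK (c + d) = constK c + (constK d :: 'k::field poly fract)"
  unfolding constK_def by simp
lemma constK_mult: "constK (c * d) = constK c * (constK d :: 'k::field poly fract)"
  unfolding constK_def by (simp add: mult.commute)
lemma constK_0: "constK 0 = (0 :: 'k::field poly fract)"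
  unfolding constK_def by (simp add: Zero_fract_def)
lemma constK_1: "constK 1 = (1 :: 'k::field poly fract)"
  unfolding constK_def by (simp add: One_fract_def one_pCons)
lemma constK_nz: "(c::'k::field) \<noteq> 0 \<Longrightarrow> constK c \<noteq> 0"
  unfolding constK_def by (simp add: Zero_fract_def eq_fract)

definition aniso4 :: "'a::field \<Rightarrow> 'a \<Rightarrow> 'a \<Rightarrow> 'a \<Rightarrow> bool" where
  "aniso4 d1 d2 d3 d4 \<longleftrightarrow> (\<forall>r1 r2 r3 r4. d1 * r1\<^sup>2 + d2 * r2\<^sup>2 + d3 * r3\<^sup>2 + d4 * r4\<^sup>2 = 0 \<longrightarrow> r1 = 0 \<and> r2 = 0 \<and> r3 = 0 \<and> r4 = 0)"

lemma norm_mult: "((p::'a::field)\<^sup>2 + b * q\<^sup>2) * (r\<^sup>2 + b * s\<^sup>2) = (p * r - b * q * s)\<^sup>2 + b * (p * s + q * r)\<^sup>2"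
  by (simp add: power2_eq_square algebra_simps)

lemma k_lemma:
  fixes a b c :: "'a::field"
  assumes an: "aniso4 1 b (- a) (- (a * b))" and c: "c \<noteq> 0"
  shows "aniso4 1 b c (b * c) \<or> aniso4 1 b (a * c) (b * (a * c))"
proof (rule ccontr)
  assume "\<not> ?thesis"
  then obtain x1 x2 x3 x4 y1 y2 y3 y4 where
    x: "1 * x1\<^sup>2 + b * x2\<^sup>2 + c * x3\<^sup>2 + (b * c) * x4\<^sup>2 = 0" "\<not> (x1 = 0 \<and> x2 = 0 \<and> x3 = 0 \<and> x4 = 0)" and
    y: "1 * y1\<^sup>2 + b * y2\<^sup>2 + (a * c) * y3\<^sup>2 + (b * (a * c)) * y4\<^sup>2 = 0" "\<not> (y1 = 0 \<and> y2 = 0 \<and> y3 = 0 \<and> y4 = 0)"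
    unfolding aniso4_def by blast
  define N where "N p q = p\<^sup>2 + b * q\<^sup>2" for p q
  have N0: "N p q = 0 \<Longrightarrow> p = 0 \<and> q = 0" for p q
    using an[unfolded aniso4_def, rule_format, of p q 0 0] unfolding N_def by simp
  have "N x1 x2 + c * N x3 x4 = 0" using x(1) unfolding N_def by (simp add: algebra_simps)
  then have ex: "N x1 x2 = - c * N x3 x4" by (simp only: mult_minus_left eq_neg_iff_add_eq_0)
  have "N y1 y2 + (a * c) * N y3 y4 = 0" using y(1) unfolding N_def by (simp add: algebra_simps)
  then have ey: "N y1 y2 = - (a * c) * N y3 y4" by (simp only: mult_minus_left eq_neg_iff_add_eq_0)
  have nx: "N x1 x2 \<noteq> 0"
  proof
    assume h: "N x1 x2 = 0"
    then have "N x3 x4 = 0" using ex c by simp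
    then show False using h N0 x(2) by blast
  qed
  have ny: "N y3 y4 \<noteq> 0"
  proof
    assume h: "N y3 y4 = 0"
    then have "N y1 y2 = 0" using ey by simp
    then show False using h N0 y(2) by blast
  qed
  define p1 where "p1 = y3 * x1 - b * y4 * x2"
  define p2 where "p2 = y3 * x2 + y4 * x1"
  define q1 where "q1 = y1 * x3 - b * y2 * x4"
  define q2 where "q2 = y1 * x4 + y2 * x3"
  have Np: "N p1 p2 = N y3 y4 * N x1 x2" unfolding N_def p1_def p2_def by (rule norm_mult[symmetric])
  have Nq: "N q1 q2 = N y1 y2 * N x3 x4" unfolding N_def q1_def q2_def by (rule norm_mult[symmetric])
  have "a * N p1 p2 = N q1 q2" unfolding Np Nq ex ey by (simp add: algebra_simps)
  then have "1 * q1\<^sup>2 + b * q2\<^sup>2 + (- a) * p1\<^sup>2 + (- (a * b)) * p2\<^sup>2 = 0"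
    unfolding N_def by (simp add: algebra_simps)
  then have "p1 = 0 \<and> p2 = 0" using an unfolding aniso4_def by blast
  then have "N p1 p2 = 0" unfolding N_def by simp
  then show False using Np nx ny by simp
qed

definition Mset :: "('L::field \<Rightarrow> int) \<Rightarrow> 'L \<Rightarrow> bool" where
  "Mset v z \<longleftrightarrow> z = 0 \<or> 0 < v z"
definition Oset :: "('L::field \<Rightarrow> int) \<Rightarrow> 'L \<Rightarrow> bool" where
  "Oset v z \<longleftrightarrow> z = 0 \<or> 0 \<le> v z"

context
  fixes v :: "'L::field \<Rightarrow> int"
  assumes dv: "discrete_valuation v"
begin

lemma dv_mult: "x \<noteq> 0 \<Longrightarrow> y \<noteq> 0 \<Longrightarrow> v (x * y) = v x + v y"
  using dv unfolding discrete_valuation_def by blast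
lemma dv_add: "x \<noteq> 0 \<Longrightarrow> y \<noteq> 0 \<Longrightarrow> x + y \<noteq> 0 \<Longrightarrow> min (v x) (v y) \<le> v (x + y)"
  using dv unfolding discrete_valuation_def by blast
lemma dv_one: "v 1 = 0"
  using dv_mult[of 1 1] by simp
lemma dv_m1: "v (-1) = 0"
  using dv_mult[of "-1" "-1"] dv_one by simp
lemma dv_neg: "v (- x) = v x"
proof (cases "x = 0")
  case False
  then show ?thesis using dv_mult[of "-1" x] dv_m1 by simp
qed simp
lemma dv_power: "x \<noteq> 0 \<Longrightarrow> v (x ^ n) = int n * v x"
  by (induction n) (simp_all add: dv_one dv_mult algebra_simps)

lemma M_add: "Mset v x \<Longrightarrow> Mset v y \<Longrightarrow> Mset v (x + y)"
  unfolding Mset_def using dv_add[of x y] by fastforce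
lemma M_neg: "Mset v x \<Longrightarrow> Mset v (- x)"
  unfolding Mset_def using dv_neg by simp
lemma M_diff: "Mset v x \<Longrightarrow> Mset v y \<Longrightarrow> Mset v (x - y)"
  using M_add[of x "-y"] M_neg by simp
lemma M_mult: "Mset v x \<Longrightarrow> Oset v y \<Longrightarrow> Mset v (x * y)"
  unfolding Mset_def Oset_def by (cases "x = 0"; cases "y = 0") (auto simp: dv_mult)
lemma O_add: "Oset v x \<Longrightarrow> Oset v y \<Longrightarrow> Oset v (x + y)"
  unfolding Oset_def using dv_add[of x y] by fastforce
lemma O_mult: "Oset v x \<Longrightarrow> Oset v y \<Longrightarrow> Oset v (x * y)"
  unfolding Oset_def by (cases "x = 0"; cases "y = 0") (auto simp: dv_mult)
lemma M_O: "Mset v x \<Longrightarrow> Oset v x"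
  unfolding Mset_def Oset_def by auto

lemma unit_plus_M:
  assumes "A \<noteq> 0" "v A = 0" "Mset v E"
  shows "A + E \<noteq> 0 \<and> v (A + E) = 0"
proof (cases "E = 0")
  case False
  then have vE: "0 < v E" using assms(3) Mset_def by auto
  have nz: "A + E \<noteq> 0"
  proof
    assume "A + E = 0"
    then have "A = - E" by (simp add: eq_neg_iff_add_eq_0)
    then show False using vE assms(2) dv_neg by simp
  qed
  have "min (v A) (v E) \<le> v (A + E)" using dv_add assms False nz by blast
  then have g: "0 \<le> v (A + E)" using assms vE by simp
  have "min (v (A + E)) (v (- E)) \<le> v (A + E + - E)"
    using dv_add[of "A + E" "- E"] nz False assms(1) by simp
  then have "min (v (A + E)) (v E) \<le> 0" using assms(2) dv_neg by simp
  then show ?thesis using g vE nz by linarith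
qed (use assms in simp)

end

locale emb =
  fixes \<phi> :: "'k::field poly fract \<Rightarrow> 'L::field" and v :: "'L \<Rightarrow> int"
  assumes fe: "field_embedding \<phi>"
    and ur: "unramified_prime_above_T \<phi> v"
    and rk: "residue_field_is_k \<phi> v"
begin

lemma dvv: "discrete_valuation v" using ur unfolding unramified_prime_above_T_def by blast
lemma vphi: "g \<noteq> 0 \<Longrightarrow> v (\<phi> g) = ordT g" using ur unfolding unramified_prime_above_T_def by blast

lemma emb_add: "\<phi> (x + y) = \<phi> x + \<phi> y" using fe unfolding field_embedding_def by blast
lemma emb_mult: "\<phi> (x * y) = \<phi> x * \<phi> y" using fe unfolding field_embedding_def by blast
lemma emb_1: "\<phi> 1 = 1" using fe unfolding field_embedding_def by blast
lemma emb_0: "\<phi> 0 = 0" using emb_add[of 0 0] by (metis add.right_neutral add_left_cancel)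
lemma emb_neg: "\<phi> (- x) = - \<phi> x" using emb_add[of x "-x"] emb_0 by (metis minus_unique add.right_inverse)
lemma emb_nz: "x \<noteq> 0 \<Longrightarrow> \<phi> x \<noteq> 0"
  using emb_mult[of x "inverse x"] emb_1 by auto

definition phic :: "'k \<Rightarrow> 'L" where "phic c = \<phi> (constK c)"

lemma phic_add: "phic (c + d) = phic c + phic d" unfolding phic_def by (simp add: constK_add emb_add)
lemma phic_mult: "phic (c * d) = phic c * phic d" unfolding phic_def by (simp add: constK_mult emb_mult)
lemma phic_0: "phic 0 = 0" unfolding phic_def by (simp add: constK_0 emb_0)
lemma phic_1: "phic 1 = 1" unfolding phic_def by (simp add: constK_1 emb_1)
lemma phic_neg: "phic (- c) = - phic c" unfolding phic_def
  using constK_add[of c "-c"] constK_0 emb_add emb_0 by (metis minus_unique add.right_inverse)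
lemma phic_power: "phic (c ^ n) = phic c ^ n"
  by (induction n) (simp_all add: phic_1 phic_mult)
lemma phic_nz: "c \<noteq> 0 \<Longrightarrow> phic c \<noteq> 0" unfolding phic_def by (simp add: constK_nz emb_nz)
lemma v_phic: "c \<noteq> 0 \<Longrightarrow> v (phic c) = 0" unfolding phic_def by (simp add: constK_nz vphi ordT_constK)
lemma O_phic: "Oset v (phic c)" unfolding Oset_def by (cases "c = 0") (simp_all add: v_phic phic_0)

lemma residue: "Oset v z \<Longrightarrow> \<exists>r. Mset v (z - phic r)"
proof -
  assume "Oset v z"
  show ?thesis
  proof (cases "z = 0")
    case True then show ?thesis by (intro exI[of _ 0]) (simp add: phic_0 Mset_def)
  next
    case False
    then have "0 \<le> v z" using \<open>Oset v z\<close> Oset_def by auto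
    then obtain c where "z = \<phi> (constK c) \<or> (z - \<phi> (constK c) \<noteq> 0 \<and> 0 < v (z - \<phi> (constK c)))"
      using rk False unfolding residue_field_is_k_def by blast
    then show ?thesis unfolding Mset_def phic_def by auto
  qed
qed

lemma res_sq_term:
  assumes "Mset v (C - phic d)" "Mset v (z - phic r)" "Oset v z"
  shows "Mset v (C * z\<^sup>2 - phic (d * r\<^sup>2))"
proof -
  have e: "C * z\<^sup>2 - phic (d * r\<^sup>2) = (C - phic d) * z\<^sup>2 + phic d * ((z - phic r) * (z + phic r))"
    by (simp add: phic_mult phic_power algebra_simps power2_eq_square)
  have "Oset v (z\<^sup>2)" using assms(3) O_mult[OF dvv] by (simp add: power2_eq_square)
  then have 1: "Mset v ((C - phic d) * z\<^sup>2)" using M_mult[OF dvv] assms(1) by blast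
  have "Oset v (z + phic r)" using O_add[OF dvv] assms(3) O_phic by blast
  then have "Mset v ((z - phic r) * (z + phic r))" using M_mult[OF dvv] assms(2) by blast
  then have "Mset v (phic d * ((z - phic r) * (z + phic r)))"
    using M_mult[OF dvv] O_phic by (metis mult.commute)
  then show ?thesis using e 1 M_add[OF dvv] by metis
qed

lemma form4_norm:
  assumes C: "Mset v (C1 - phic d1)" "Mset v (C2 - phic d2)" "Mset v (C3 - phic d3)" "Mset v (C4 - phic d4)"
    and an: "\<And>r1 r2 r3 r4. d1 * r1\<^sup>2 + d2 * r2\<^sup>2 + d3 * r3\<^sup>2 + d4 * r4\<^sup>2 = 0 \<Longrightarrow> r1 = 0 \<and> r2 = 0 \<and> r3 = 0 \<and> r4 = 0"
    and O: "Oset v z1" "Oset v z2" "Oset v z3" "Oset v z4"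
    and nM: "\<not> (Mset v z1 \<and> Mset v z2 \<and> Mset v z3 \<and> Mset v z4)"
  shows "C1 * z1\<^sup>2 + C2 * z2\<^sup>2 + C3 * z3\<^sup>2 + C4 * z4\<^sup>2 \<noteq> 0 \<and> v (C1 * z1\<^sup>2 + C2 * z2\<^sup>2 + C3 * z3\<^sup>2 + C4 * z4\<^sup>2) = 0"
proof -
  obtain r1 where r1: "Mset v (z1 - phic r1)" using residue O(1) by blast
  obtain r2 where r2: "Mset v (z2 - phic r2)" using residue O(2) by blast
  obtain r3 where r3: "Mset v (z3 - phic r3)" using residue O(3) by blast
  obtain r4 where r4: "Mset v (z4 - phic r4)" using residue O(4) by blast
  define D where "D = d1 * r1\<^sup>2 + d2 * r2\<^sup>2 + d3 * r3\<^sup>2 + d4 * r4\<^sup>2"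
  have "D \<noteq> 0"
  proof
    assume "D = 0"
    then have "r1 = 0 \<and> r2 = 0 \<and> r3 = 0 \<and> r4 = 0" using an[of r1 r2 r3 r4] unfolding D_def by blast
    then show False using nM r1 r2 r3 r4 by (simp add: phic_0)
  qed
  then have A: "phic D \<noteq> 0" "v (phic D) = 0" using phic_nz v_phic by auto
  define S where "S = C1 * z1\<^sup>2 + C2 * z2\<^sup>2 + C3 * z3\<^sup>2 + C4 * z4\<^sup>2"
  have "S - phic D = (C1 * z1\<^sup>2 - phic (d1 * r1\<^sup>2)) + (C2 * z2\<^sup>2 - phic (d2 * r2\<^sup>2))
      + (C3 * z3\<^sup>2 - phic (d3 * r3\<^sup>2)) + (C4 * z4\<^sup>2 - phic (d4 * r4\<^sup>2))"
    unfolding S_def D_def by (simp add: phic_add algebra_simps)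
  moreover have "Mset v (C1 * z1\<^sup>2 - phic (d1 * r1\<^sup>2))" using res_sq_term C(1) r1 O(1) by blast
  moreover have "Mset v (C2 * z2\<^sup>2 - phic (d2 * r2\<^sup>2))" using res_sq_term C(2) r2 O(2) by blast
  moreover have "Mset v (C3 * z3\<^sup>2 - phic (d3 * r3\<^sup>2))" using res_sq_term C(3) r3 O(3) by blast
  moreover have "Mset v (C4 * z4\<^sup>2 - phic (d4 * r4\<^sup>2))" using res_sq_term C(4) r4 O(4) by blast
  ultimately have "Mset v (S - phic D)" using M_add[OF dvv] by metis
  then have "phic D + (S - phic D) \<noteq> 0 \<and> v (phic D + (S - phic D)) = 0"
    using unit_plus_M[OF dvv] A by blast
  then show ?thesis unfolding S_def by (simp add: add.assoc)
qed


lemma O_div: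
  assumes "w \<noteq> 0" "y = 0 \<or> v w \<le> v y"
  shows "Oset v (y / w)"
proof (cases "y = 0")
  case False
  have "y = (y / w) * w" using assms(1) by simp
  then have "v y = v (y / w) + v w" using dv_mult[OF dvv, of "y / w" w] assms(1) False by simp
  then show ?thesis using assms False unfolding Oset_def by auto
qed (simp add: Oset_def)

lemma form4_even:
  assumes C: "Mset v (C1 - phic d1)" "Mset v (C2 - phic d2)" "Mset v (C3 - phic d3)" "Mset v (C4 - phic d4)"
    and an: "\<And>r1 r2 r3 r4. d1 * r1\<^sup>2 + d2 * r2\<^sup>2 + d3 * r3\<^sup>2 + d4 * r4\<^sup>2 = 0 \<Longrightarrow> r1 = 0 \<and> r2 = 0 \<and> r3 = 0 \<and> r4 = 0"
    and nz: "y1 \<noteq> 0 \<or> y2 \<noteq> 0 \<or> y3 \<noteq> 0 \<or> y4 \<noteq> 0"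
  shows "C1 * y1\<^sup>2 + C2 * y2\<^sup>2 + C3 * y3\<^sup>2 + C4 * y4\<^sup>2 \<noteq> 0 \<and> (\<exists>n. v (C1 * y1\<^sup>2 + C2 * y2\<^sup>2 + C3 * y3\<^sup>2 + C4 * y4\<^sup>2) = 2 * n)"
proof -
  define Y where "Y = {y. y \<in> {y1, y2, y3, y4} \<and> y \<noteq> 0}"
  have fY: "finite Y" unfolding Y_def by simp
  have neY: "Y \<noteq> {}" using nz unfolding Y_def by auto
  have "Min (v ` Y) \<in> v ` Y" using fY neY by simp
  then obtain w where w: "w \<in> Y" "v w = Min (v ` Y)" by auto
  have wmin: "\<And>y. y \<in> {y1, y2, y3, y4} \<Longrightarrow> y = 0 \<or> v w \<le> v y"
  proof -
    fix y assume "y \<in> {y1, y2, y3, y4}"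
    show "y = 0 \<or> v w \<le> v y"
    proof (cases "y = 0")
      case False
      then have "y \<in> Y" using \<open>y \<in> {y1, y2, y3, y4}\<close> Y_def by auto
      then show ?thesis using w(2) fY Min_le by auto
    qed simp
  qed
  have w0: "w \<noteq> 0" using w(1) Y_def by auto
  have O: "Oset v (y1 / w)" "Oset v (y2 / w)" "Oset v (y3 / w)" "Oset v (y4 / w)"
    using O_div[OF w0] wmin by auto
  have "w = y1 \<or> w = y2 \<or> w = y3 \<or> w = y4" using w(1) Y_def by auto
  moreover have "\<not> Mset v (w / w)" using w0 dv_one[OF dvv] by (simp add: Mset_def)
  ultimately have nM: "\<not> (Mset v (y1 / w) \<and> Mset v (y2 / w) \<and> Mset v (y3 / w) \<and> Mset v (y4 / w))" by auto
  define T where "T = C1 * (y1 / w)\<^sup>2 + C2 * (y2 / w)\<^sup>2 + C3 * (y3 / w)\<^sup>2 + C4 * (y4 / w)\<^sup>2"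
  have T: "T \<noteq> 0" "v T = 0" using form4_norm[OF C an O nM] unfolding T_def by auto
  have e: "C1 * y1\<^sup>2 + C2 * y2\<^sup>2 + C3 * y3\<^sup>2 + C4 * y4\<^sup>2 = w\<^sup>2 * T"
    unfolding T_def using w0 by (simp add: field_simps power2_eq_square)
  have "w\<^sup>2 \<noteq> 0" using w0 by simp
  moreover have "v (w\<^sup>2 * T) = 2 * v w"
    using dv_mult[OF dvv, of "w\<^sup>2" T] dv_power[OF dvv w0, of 2] T w0 by simp
  ultimately show ?thesis using e T by auto
qed

lemma springer:
  assumes t: "t \<noteq> 0" "v t = 1"
    and an1: "aniso4 1 b (- a) (- (a * b))"
    and U: "Mset v (U - phic e)" and an2: "aniso4 1 b e (b * e)"
    and eq: "t * (x1\<^sup>2 + phic b * x2\<^sup>2 + (- phic a) * x3\<^sup>2 + (- (phic a * phic b)) * x4\<^sup>2)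
           = x5\<^sup>2 + phic b * x6\<^sup>2 + U * x7\<^sup>2 + (U * phic b) * x8\<^sup>2"
  shows "x1 = 0 \<and> x2 = 0 \<and> x3 = 0 \<and> x4 = 0 \<and> x5 = 0 \<and> x6 = 0 \<and> x7 = 0 \<and> x8 = 0"
proof -
  have M0: "Mset v 0" by (simp add: Mset_def)
  have C1: "Mset v (1 - phic 1)" "Mset v (phic b - phic b)" "Mset v ((- phic a) - phic (- a))"
     "Mset v ((- (phic a * phic b)) - phic (- (a * b)))"
    by (simp_all add: phic_1 phic_neg phic_mult M0)
  have C2: "Mset v (1 - phic 1)" "Mset v (phic b - phic b)" "Mset v (U - phic e)"
     "Mset v ((U * phic b) - phic (b * e))"
  proof -
    show "Mset v (1 - phic 1)" "Mset v (phic b - phic b)" "Mset v (U - phic e)" by (simp_all add: phic_1 M0 U)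
    have "(U * phic b) - phic (b * e) = (U - phic e) * phic b" by (simp add: phic_mult algebra_simps)
    then show "Mset v ((U * phic b) - phic (b * e))" using M_mult[OF dvv U O_phic] by simp
  qed
  have a1: "\<And>r1 r2 r3 r4. 1 * r1\<^sup>2 + b * r2\<^sup>2 + (- a) * r3\<^sup>2 + (- (a * b)) * r4\<^sup>2 = 0 \<Longrightarrow> r1 = 0 \<and> r2 = 0 \<and> r3 = 0 \<and> r4 = 0"
    using an1 unfolding aniso4_def by blast
  have a2: "\<And>r1 r2 r3 r4. 1 * r1\<^sup>2 + b * r2\<^sup>2 + e * r3\<^sup>2 + (b * e) * r4\<^sup>2 = 0 \<Longrightarrow> r1 = 0 \<and> r2 = 0 \<and> r3 = 0 \<and> r4 = 0"
    using an2 unfolding aniso4_def by blast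
  note E1 = form4_even[OF C1 a1, of x1 x2 x3 x4]
  note E2 = form4_even[OF C2 a2, of x5 x6 x7 x8]
  show ?thesis
  proof (cases "x1 \<noteq> 0 \<or> x2 \<noteq> 0 \<or> x3 \<noteq> 0 \<or> x4 \<noteq> 0")
    case True
    define P where "P = 1 * x1\<^sup>2 + phic b * x2\<^sup>2 + (- phic a) * x3\<^sup>2 + (- (phic a * phic b)) * x4\<^sup>2"
    obtain n where P: "P \<noteq> 0" "v P = 2 * n" using E1 True unfolding P_def by blast
    have L: "t * P \<noteq> 0" "v (t * P) = 1 + 2 * n" using P t dv_mult[OF dvv, of t P] by auto
    define Q where "Q = 1 * x5\<^sup>2 + phic b * x6\<^sup>2 + U * x7\<^sup>2 + (U * phic b) * x8\<^sup>2"
    have tQ: "t * P = Q" using eq unfolding P_def Q_def by simp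
    have "x5 \<noteq> 0 \<or> x6 \<noteq> 0 \<or> x7 \<noteq> 0 \<or> x8 \<noteq> 0"
    proof (rule ccontr)
      assume "\<not> ?thesis"
      then have "Q = 0" unfolding Q_def by simp
      then show False using L tQ by simp
    qed
    then obtain n' where "v Q = 2 * n'" using E2 unfolding Q_def by blast
    then have "1 + 2 * n = 2 * n'" using L tQ by simp
    then show ?thesis by presburger
  next
    case False
    then have "1 * x5\<^sup>2 + phic b * x6\<^sup>2 + U * x7\<^sup>2 + (U * phic b) * x8\<^sup>2 = 0" using eq by simp
    then have "x5 = 0 \<and> x6 = 0 \<and> x7 = 0 \<and> x8 = 0" using E2 by blast
    then show ?thesis using False by simp
  qed
qed
end

lemma aniso4_of:
  fixes c1 c2 c3 c4 :: "'a::field"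
  assumes "qf_anisotropic [c1, c2, c3, c4]"
  shows "aniso4 c1 c2 c3 c4"
  unfolding aniso4_def
proof (intro allI impI, rule ccontr)
  fix r1 r2 r3 r4 assume h: "c1 * r1\<^sup>2 + c2 * r2\<^sup>2 + c3 * r3\<^sup>2 + c4 * r4\<^sup>2 = 0" "\<not> (r1 = 0 \<and> r2 = 0 \<and> r3 = 0 \<and> r4 = 0)"
  have "qf_isotropic [c1, c2, c3, c4]" unfolding qf_isotropic_def
    by (rule exI[of _ "[r1, r2, r3, r4]"]) (use h in \<open>auto simp: add.assoc\<close>)
  then show False using assms unfolding qf_anisotropic_def by blast
qed

lemma iso8:
  fixes c1 c2 c3 c4 c5 c6 c7 c8 :: "'a::field"
  assumes "qf_isotropic [c1, c2, c3, c4, c5, c6, c7, c8]"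
  shows "\<exists>x1 x2 x3 x4 x5 x6 x7 x8. \<not> (x1 = 0 \<and> x2 = 0 \<and> x3 = 0 \<and> x4 = 0 \<and> x5 = 0 \<and> x6 = 0 \<and> x7 = 0 \<and> x8 = 0)
     \<and> c1 * x1\<^sup>2 + c2 * x2\<^sup>2 + c3 * x3\<^sup>2 + c4 * x4\<^sup>2 + c5 * x5\<^sup>2 + c6 * x6\<^sup>2 + c7 * x7\<^sup>2 + c8 * x8\<^sup>2 = 0"
proof -
  obtain xs where xs0: "length xs = length [c1, c2, c3, c4, c5, c6, c7, c8]" "\<exists>x\<in>set xs. x \<noteq> 0" "sum_list (map2 (\<lambda>c x. c * x\<^sup>2) [c1, c2, c3, c4, c5, c6, c7, c8] xs) = 0"
    using assms unfolding qf_isotropic_def by blast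
  note xs = xs0(2,3)
  from xs0(1) obtain x1 x2 x3 x4 x5 x6 x7 x8 where "xs = [x1, x2, x3, x4, x5, x6, x7, x8]"
    by (auto simp: numeral_eq_Suc length_Suc_conv)
  then have "\<not> (x1 = 0 \<and> x2 = 0 \<and> x3 = 0 \<and> x4 = 0 \<and> x5 = 0 \<and> x6 = 0 \<and> x7 = 0 \<and> x8 = 0)"
     "c1 * x1\<^sup>2 + c2 * x2\<^sup>2 + c3 * x3\<^sup>2 + c4 * x4\<^sup>2 + c5 * x5\<^sup>2 + c6 * x6\<^sup>2 + c7 * x7\<^sup>2 + c8 * x8\<^sup>2 = 0"
    using xs by (auto simp: add.assoc)
  then show ?thesis by blast
qed

lemma tensor4: "qf_tensor [p1, p2, p3, p4] [1, B] = [p1, p1 * B, p2, p2 * B, p3, p3 * B, p4, p4 * B]"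
  unfolding qf_tensor_def by simp
lemma tensor2: "qf_tensor [1, - a] [1, b] = [1, b, - a, - (a * b)]"
  unfolding qf_tensor_def by simp

context emb
begin

lemma t_props: "\<phi> varT \<noteq> 0" "v (\<phi> varT) = 1"
proof -
  have "varT \<noteq> (0 :: 'k poly fract)" unfolding varT_def by (simp add: Zero_fract_def eq_fract)
  then show "\<phi> varT \<noteq> 0" "v (\<phi> varT) = 1" using emb_nz vphi ordT_varT by auto
qed

lemma case_lemma:
  assumes G: "G = U * w\<^sup>2" and w: "w \<noteq> 0" and U: "Mset v (U - phic e)"
    and an2: "aniso4 1 b e (b * e)" and an1: "aniso4 1 b (- a) (- (a * b))"
  shows "qf_anisotropic (qf_tensor [\<phi> varT, - \<phi> (constK a) * \<phi> varT, - 1, - G] [1, \<phi> (constK b)])"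
  unfolding qf_anisotropic_def tensor4
proof
  assume "qf_isotropic [\<phi> varT, \<phi> varT * \<phi> (constK b), - \<phi> (constK a) * \<phi> varT, - \<phi> (constK a) * \<phi> varT * \<phi> (constK b), - 1, - 1 * \<phi> (constK b), - G, - G * \<phi> (constK b)]"
  from iso8[OF this] obtain x1 x2 x3 x4 x5 x6 x7 x8 where
    nz: "\<not> (x1 = 0 \<and> x2 = 0 \<and> x3 = 0 \<and> x4 = 0 \<and> x5 = 0 \<and> x6 = 0 \<and> x7 = 0 \<and> x8 = 0)" and
    eq: "\<phi> varT * x1\<^sup>2 + \<phi> varT * \<phi> (constK b) * x2\<^sup>2 + - \<phi> (constK a) * \<phi> varT * x3\<^sup>2 +
       - \<phi> (constK a) * \<phi> varT * \<phi> (constK b) * x4\<^sup>2 + - 1 * x5\<^sup>2 + - 1 * \<phi> (constK b) * x6\<^sup>2 +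
       - G * x7\<^sup>2 + - G * \<phi> (constK b) * x8\<^sup>2 = 0" by blast
  define t where "t = \<phi> varT"
  have eq': "\<phi> varT * x1\<^sup>2 + \<phi> varT * phic b * x2\<^sup>2 + - phic a * \<phi> varT * x3\<^sup>2 +
       - phic a * \<phi> varT * phic b * x4\<^sup>2 + - 1 * x5\<^sup>2 + - 1 * phic b * x6\<^sup>2 +
       - G * x7\<^sup>2 + - G * phic b * x8\<^sup>2 = 0" using eq unfolding phic_def .
  have d: "t * (x1\<^sup>2 + phic b * x2\<^sup>2 + (- phic a) * x3\<^sup>2 + (- (phic a * phic b)) * x4\<^sup>2)
           - (x5\<^sup>2 + phic b * x6\<^sup>2 + U * (w * x7)\<^sup>2 + (U * phic b) * (w * x8)\<^sup>2) =
      \<phi> varT * x1\<^sup>2 + \<phi> varT * phic b * x2\<^sup>2 + - phic a * \<phi> varT * x3\<^sup>2 +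
       - phic a * \<phi> varT * phic b * x4\<^sup>2 + - 1 * x5\<^sup>2 + - 1 * phic b * x6\<^sup>2 +
       - G * x7\<^sup>2 + - G * phic b * x8\<^sup>2"
    unfolding t_def G by (simp add: power_mult_distrib algebra_simps)
  have "t * (x1\<^sup>2 + phic b * x2\<^sup>2 + (- phic a) * x3\<^sup>2 + (- (phic a * phic b)) * x4\<^sup>2)
           = x5\<^sup>2 + phic b * x6\<^sup>2 + U * (w * x7)\<^sup>2 + (U * phic b) * (w * x8)\<^sup>2"
    using d[unfolded eq'] by (simp only: right_minus_eq)
  from springer[OF _ _ an1 U an2 this] t_props have
    "x1 = 0 \<and> x2 = 0 \<and> x3 = 0 \<and> x4 = 0 \<and> x5 = 0 \<and> x6 = 0 \<and> w * x7 = 0 \<and> w * x8 = 0"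
    unfolding t_def by blast
  then show False using nz w by simp
qed

end

theorem lemma6p1:
  fixes a b :: "'k::field_char_0"
    and \<phi> :: "'k poly fract \<Rightarrow> 'L::field"
    and v :: "'L \<Rightarrow> int"
    and g :: "'k poly fract"
  assumes "a \<noteq> 0" and "b \<noteq> 0"
    and "qf_anisotropic (qf_tensor [1, - a] [1, b])"
    and "finite_extension \<phi>"
    and "unramified_prime_above_T \<phi> v"
    and "residue_field_is_k \<phi> v"
    and "g \<noteq> 0" and "0 \<le> ordT g" and "even (ordT g)"
  shows "qf_anisotropic (qf_tensor [\<phi> varT, - \<phi> (constK a) * \<phi> varT, - 1, - \<phi> g] [1, \<phi> (constK b)])
       \<or> qf_anisotropic (qf_tensor [\<phi> varT, - \<phi> (constK a) * \<phi> varT, - 1, - \<phi> (constK a) * \<phi> g] [1, \<phi> (constK b)])"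
proof -
  interpret E: emb \<phi> v
    using assms(4-6) unfolding finite_extension_def by unfold_locales auto
  have dv: "discrete_valuation v" by (rule E.dvv)
  have an1: "aniso4 1 b (- a) (- (a * b))" using aniso4_of assms(3) unfolding tensor2 by blast
  obtain k where k: "ordT g = 2 * k" using assms(9) by (elim evenE)
  define m where "m = nat k"
  have m: "ordT g = 2 * int m" using k assms(8) unfolding m_def by simp
  define t where "t = \<phi> varT"
  have t: "t \<noteq> 0" "v t = 1" using E.t_props unfolding t_def by auto
  define w where "w = t ^ m"
  have w: "w \<noteq> 0" "v w = int m" unfolding w_def using t dv_power[OF dv] by auto
  define G where "G = \<phi> g"
  have G: "G \<noteq> 0" "v G = 2 * int m" unfolding G_def using E.emb_nz E.vphi assms(7) m by auto
  define u where "u = G / w\<^sup>2"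
  have Gu: "G = u * w\<^sup>2" unfolding u_def using w by simp
  have u0: "u \<noteq> 0" using G Gu by auto
  have "v G = v u + v (w\<^sup>2)" using Gu dv_mult[OF dv, of u "w\<^sup>2"] u0 w by simp
  moreover have "v (w\<^sup>2) = 2 * int m" using dv_power[OF dv w(1), of 2] w by simp
  ultimately have vu: "v u = 0" using G by simp
  then have "Oset v u" by (simp add: Oset_def)
  then obtain c where c: "Mset v (u - E.phic c)" using E.residue by blast
  have c0: "c \<noteq> 0"
  proof
    assume "c = 0"
    then have "Mset v u" using c by (simp add: E.phic_0)
    then show False using u0 vu by (simp add: Mset_def)
  qed
  from k_lemma[OF an1 c0] show ?thesis
  proof
    assume "aniso4 1 b c (b * c)"
    from E.case_lemma[OF Gu w(1) c this an1] show ?thesis unfolding G_def by blast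
  next
    assume h: "aniso4 1 b (a * c) (b * (a * c))"
    have Gu2: "\<phi> (constK a) * G = (E.phic a * u) * w\<^sup>2" using Gu by (simp add: E.phic_def)
    have "E.phic a * u - E.phic (a * c) = (u - E.phic c) * E.phic a" by (simp add: E.phic_mult algebra_simps)
    then have "Mset v (E.phic a * u - E.phic (a * c))" using M_mult[OF dv c E.O_phic] by simp
    from E.case_lemma[OF Gu2 w(1) this h an1] show ?thesis unfolding G_def mult_minus_left by blast
  qed
qed
end
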